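(* Let $c\in\mathbb{R}$ with $0<c<1$ and let $s\in\mathbb{C}$, $s\neq0$. Then $$\eta(s+1)=-\frac{\pi}{2s}\int_{-\infty}^{\infty}\frac{(c+it)^{-s}\cos\big(\pi(c+it)\big)}{\sin^2\big(\pi(c+it)\big)}\,dt .$$
   Context: $\eta(s)=(1-2^{1-s})\zeta(s)$ is Dirichlet's eta function, which equals $\sum_{k\ge1}(-1)^{k+1}k^{-s}$ for $\operatorname{Re}s>0$ and is entire. Powers $(c+it)^{-s}$ use the principal branch. *)

theory Defs
  imports "HOL-Analysis.Analysis"
begin

definition dirichlet_eta :: "complex \<Rightarrow> complex" where
  "dirichlet_eta = (THE f. f holomorphic_on UNIV \<and>
      (\<forall>z. 0 < Re z \<longrightarrow>
         (\<lambda>k::nat. (-1) ^ k / (of_nat (Suc k)) powr z) sums f z))"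

end

theory Submission
  imports Defs "HOL-Complex_Analysis.Complex_Analysis"
begin

lemma norm_sin_sq: "norm (sin z) ^ 2 = sin (Re z) ^ 2 + sinh (Im z) ^ 2"
proof -
  have "norm (sin z) ^ 2 = (exp(2 * Im z) + inverse(exp(2 * Im z)) - 2 * cos(2 * Re z)) / 4"
    by (rule norm_sin_squared)
  also have "cos (2 * Re z) = 1 - 2 * sin (Re z) ^ 2" by (simp add: cos_double_sin)
  also have "exp(2 * Im z) = exp (Im z) ^ 2" by (simp add: exp_double[symmetric])
  finally show ?thesis
    by (simp add: sinh_def exp_minus power2_eq_square field_simps)
qed

lemma norm_cos_sq: "norm (cos z) ^ 2 = cos (Re z) ^ 2 + sinh (Im z) ^ 2"
proof -
  have "norm (cos z) ^ 2 = sin (Re z - pi/2) ^ 2 + sinh (Im z) ^ 2"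
    using norm_sin_sq[of "z - pi/2"] by (simp add: sin_diff cos_diff)
  then show ?thesis by (simp add: sin_diff)
qed

lemma exp_abs_le_cosh: "exp \<bar>x\<bar> \<le> 2 * cosh (x::real)"
  by (cases "x \<ge> 0") (auto simp: cosh_def)

lemma norm_sin_lower1: "\<bar>sin (Re z)\<bar> * cosh (Im z) \<le> norm (sin z)"
proof -
  have "(\<bar>sin (Re z)\<bar> * cosh (Im z))^2 = sin (Re z)^2 * (1 + sinh (Im z)^2)"
    by (simp add: power_mult_distrib cosh_square_eq)
  also have "\<dots> \<le> sin (Re z) ^ 2 + sinh (Im z) ^ 2"
  proof -
    have "sin (Re z)^2 \<le> 1" using abs_sin_le_one[of "Re z"] by (simp add: abs_square_le_1)
    hence "sin (Re z)^2 * sinh (Im z)^2 \<le> sinh (Im z)^2"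
      by (simp add: mult_left_le_one_le)
    thus ?thesis by (simp add: algebra_simps)
  qed
  finally have "(\<bar>sin (Re z)\<bar> * cosh (Im z))^2 \<le> norm (sin z) ^ 2" by (simp add: norm_sin_sq)
  thus ?thesis by (rule power2_le_imp_le) simp
qed

lemma norm_sin_lower2: "\<bar>sinh (Im z)\<bar> \<le> norm (sin z)"
proof -
  have "\<bar>sinh (Im z)\<bar>^2 \<le> norm (sin z) ^ 2" by (simp add: norm_sin_sq)
  thus ?thesis by (rule power2_le_imp_le) simp
qed

lemma norm_cos_upper: "norm (cos z) \<le> cosh (Im z)"
proof -
  have "norm (cos z) ^ 2 \<le> cosh (Im z) ^ 2"
    by (simp add: norm_cos_sq cosh_square_eq cos_squared_eq abs_sin_le_one)
  thus ?thesis by (rule power2_le_imp_le) simp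
qed

lemma norm_powr_Re_pos:
  assumes "0 < Re z"
  shows "norm (z powr (-w)) \<le> norm z powr (- Re w) * exp (pi/2 * \<bar>Im w\<bar>)"
proof -
  have A: "\<bar>Arg z\<bar> < pi/2" using assms Arg_Re_pos by blast
  have "Im w * Arg z \<le> pi/2 * \<bar>Im w\<bar>"
  proof -
    have "Im w * Arg z \<le> \<bar>Im w\<bar> * \<bar>Arg z\<bar>" by (metis abs_ge_self abs_mult)
    also have "\<dots> \<le> \<bar>Im w\<bar> * (pi/2)" using A by (intro mult_left_mono) auto
    finally show ?thesis by (simp add: mult.commute)
  qed
  hence "exp (Im w * Arg z) \<le> exp (pi/2 * \<bar>Im w\<bar>)" by simp
  hence "norm z powr (- Re w) * exp (Im w * Arg z) \<le> norm z powr (- Re w) * exp (pi/2 * \<bar>Im w\<bar>)"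
    by (intro mult_left_mono) auto
  thus ?thesis by (simp add: norm_powr_complex)
qed

lemma powr_bound_gen:
  fixes r m M a R :: real
  assumes "0 < m" "m \<le> 1" "m \<le> r" "r \<le> M" "1 \<le> M" "\<bar>a\<bar> \<le> R"
  shows "r powr a \<le> m powr (-R) * M powr R"
proof -
  have R: "0 \<le> R" using assms by linarith
  have m1: "1 \<le> m powr (-R)" using powr_mono'[of "-R" 0 m] assms R by simp
  have M1: "1 \<le> M powr R" using ge_one_powr_ge_zero[of M R] assms R by simp
  show ?thesis
  proof (cases "a \<ge> 0")
    case True
    have "r powr a \<le> M powr a" using assms True by (simp add: powr_mono2)
    also have "\<dots> \<le> M powr R" using assms True by (simp add: powr_mono)
    also have "\<dots> \<le> m powr (-R) * M powr R"
      using mult_right_mono[OF m1, of "M powr R"] by simp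
    finally show ?thesis .
  next
    case False
    have "r powr a \<le> m powr a" using assms False by (metis powr_mono2' order_less_le not_le)
    also have "\<dots> \<le> m powr (-R)" using assms False by (simp add: powr_mono')
    also have "\<dots> \<le> m powr (-R) * M powr R"
      using mult_left_mono[OF M1, of "m powr (-R)"] by simp
    finally show ?thesis .
  qed
qed


lemma exp_abs_integrable: "(\<lambda>t::real. exp (- \<bar>t\<bar>)) integrable_on UNIV"
proof -
  have B: "(\<lambda>t::real. exp (- 1 * t)) integrable_on {0..}"
    by (rule integrable_on_exp_minus_to_infinity) simp
  have B': "(\<lambda>t::real. exp (- t)) absolutely_integrable_on {0..}"
    using B by (intro nonnegative_absolutely_integrable_1) auto
  have "(\<lambda>t::real. exp (- (- t))) absolutely_integrable_on {..0}"
    using has_absolute_integral_reflect_real[of "{..0}" "{0..}" "\<lambda>t. exp (-t)" "integral {0..} (\<lambda>t. exp (-t))"] B'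
    by (auto simp: image_iff)
  hence A: "(\<lambda>t::real. exp (- \<bar>t\<bar>)) integrable_on {..0}"
    by (rule integrable_eq[OF absolutely_integrable_on_def[THEN iffD1, THEN conjunct1]]) auto
  have B2: "(\<lambda>t::real. exp (- \<bar>t\<bar>)) integrable_on {0..}"
    using B by (rule integrable_eq) auto
  have "(\<lambda>t::real. exp (- \<bar>t\<bar>)) integrable_on ({..0} \<union> {0..})"
  proof (rule integrable_Un[OF _ A B2])
    have "{..0} \<inter> {0..} = {0::real}" by auto
    thus "negligible ({..0} \<inter> {0::real..})" by simp
  qed
  moreover have "{..0} \<union> {0..} = (UNIV :: real set)" by auto
  ultimately show ?thesis by simp
qed

lemma integrable_by_exp_bound:
  fixes f :: "real \<Rightarrow> complex"
  assumes "continuous_on UNIV f" "\<And>t. norm (f t) \<le> K * exp (- \<bar>t\<bar>)"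
  shows "f integrable_on UNIV"
proof (rule integrable_on_all_intervals_integrable_bound)
  show "(\<lambda>x. if x \<in> UNIV then f x else 0) integrable_on cbox a b" for a b
    using continuous_on_subset[OF assms(1), of "{a..b}"] by (simp add: integrable_continuous_real)
  show "norm (f x) \<le> K * exp (- \<bar>x\<bar>)" if "x \<in> UNIV" for x using assms(2) .
  show "(\<lambda>x. K * exp (- \<bar>x\<bar>)) integrable_on UNIV"
    using exp_abs_integrable by (rule integrable_on_mult_right)
qed

lemma pow_le_fact_exp: "0 \<le> (x::real) \<Longrightarrow> x ^ n \<le> fact n * exp x"
proof -
  assume x: "0 \<le> x"
  have "summable (\<lambda>k. x ^ k /\<^sub>R fact k)" using exp_converges[of x] by (simp add: sums_iff)
  hence "(\<Sum>k<Suc n. x ^ k /\<^sub>R fact k) \<le> (\<Sum>k. x ^ k /\<^sub>R fact k)"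
    by (intro sum_le_suminf) (auto simp: x)
  also have "\<dots> = exp x" using exp_converges[of x] by (simp add: sums_iff)
  moreover have "x ^ n / fact n \<le> (\<Sum>k<Suc n. x ^ k /\<^sub>R fact k)"
    using sum_nonneg[of "{..<n}" "\<lambda>k. x ^ k /\<^sub>R fact k"] x by (simp add: divide_inverse mult.commute)
  ultimately have "x ^ n / fact n \<le> exp x" by linarith
  thus ?thesis by (simp add: divide_simps mult.commute)
qed

lemma poly_exp_bound:
  fixes X R t :: real
  assumes "1 \<le> X" "0 \<le> R"
  shows "(X + \<bar>t\<bar>) powr R \<le> fact (nat \<lceil>R\<rceil>) * exp X * exp \<bar>t\<bar>"
proof -
  have "(X + \<bar>t\<bar>) powr R \<le> (X + \<bar>t\<bar>) powr (real (nat \<lceil>R\<rceil>))"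
    using assms real_nat_ceiling_ge[of R] abs_ge_zero[of t] by (intro powr_mono) linarith+
  also have "\<dots> = (X + \<bar>t\<bar>) ^ (nat \<lceil>R\<rceil>)"
  proof -
    have "0 < X + \<bar>t\<bar>" using assms by linarith
    from powr_realpow[OF this, of "nat \<lceil>R\<rceil>"] show ?thesis by simp
  qed
  also have "\<dots> \<le> fact (nat \<lceil>R\<rceil>) * exp (X + \<bar>t\<bar>)"
    using assms by (intro pow_le_fact_exp) auto
  finally show ?thesis by (simp only: exp_add mult.assoc)
qed


lemma cmod_le_sum: "norm (Complex x t) \<le> \<bar>x\<bar> + \<bar>t\<bar>"
  using cmod_le[of "Complex x t"] by simp

lemma ratio_bound:
  fixes A B K1 K2 t :: real
  assumes "0 \<le> A" "A \<le> K1 * exp \<bar>t\<bar>" "K2 * exp (pi * \<bar>t\<bar>) \<le> B" "0 < K2"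
  shows "A / B \<le> (K1 / K2) * exp (- \<bar>t\<bar>)"
proof -
  have "0 \<le> K1 * exp \<bar>t\<bar>" using assms by linarith
  hence K1: "0 \<le> K1" by (simp add: zero_le_mult_iff)
  have Bpos: "0 < K2 * exp (pi * \<bar>t\<bar>)" using assms by simp
  have "A / B \<le> A / (K2 * exp (pi * \<bar>t\<bar>))"
  proof (rule divide_left_mono)
    show "0 < B * (K2 * exp (pi * \<bar>t\<bar>))"
    proof -
      have "0 < B" using assms Bpos by linarith
      thus ?thesis using Bpos by (rule mult_pos_pos)
    qed
  qed (use assms in auto)
  also have "\<dots> \<le> K1 * exp \<bar>t\<bar> / (K2 * exp (pi * \<bar>t\<bar>))"
    using assms Bpos by (intro divide_right_mono) auto
  also have "\<dots> = (K1 / K2) * exp (\<bar>t\<bar> - pi * \<bar>t\<bar>)"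
    by (simp add: exp_diff)
  also have "\<dots> \<le> (K1 / K2) * exp (- \<bar>t\<bar>)"
  proof -
    have "\<bar>t\<bar> - pi * \<bar>t\<bar> \<le> - \<bar>t\<bar>"
      using mult_right_mono[of 2 pi "\<bar>t\<bar>"] pi_gt3 by linarith
    thus ?thesis using K1 assms by (intro mult_left_mono) auto
  qed
  finally show ?thesis .
qed

definition Kp :: "real \<Rightarrow> real \<Rightarrow> real" where
  "Kp x R = (min x 1) powr (-R) * (fact (nat \<lceil>R\<rceil>) * exp (\<bar>x\<bar> + 1)) * exp (pi/2 * R)"

lemma powr_exp_bound:
  assumes "0 < x" "\<bar>Re w\<bar> \<le> R" "\<bar>Im w\<bar> \<le> R"
  shows "norm (Complex x t powr (-w)) \<le> Kp x R * exp \<bar>t\<bar>"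
proof -
  let ?z = "Complex x t"
  have R: "0 \<le> R" using assms by linarith
  have "norm (?z powr (-w)) \<le> norm ?z powr (- Re w) * exp (pi/2 * \<bar>Im w\<bar>)"
    using assms by (intro norm_powr_Re_pos) simp
  also have "\<dots> \<le> ((min x 1) powr (-R) * (\<bar>x\<bar> + 1 + \<bar>t\<bar>) powr R) * exp (pi/2 * R)"
  proof (intro mult_mono)
    show "norm ?z powr (- Re w) \<le> (min x 1) powr (-R) * (\<bar>x\<bar> + 1 + \<bar>t\<bar>) powr R"
    proof (rule powr_bound_gen)
      show "min x 1 \<le> norm ?z" using abs_Re_le_cmod[of ?z] by simp
      show "norm ?z \<le> \<bar>x\<bar> + 1 + \<bar>t\<bar>" using cmod_le_sum[of x t] by simp
    qed (use assms in auto)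
    show "exp (pi/2 * \<bar>Im w\<bar>) \<le> exp (pi/2 * R)" using assms by simp
  qed auto
  also have "\<dots> \<le> ((min x 1) powr (-R) * (fact (nat \<lceil>R\<rceil>) * exp (\<bar>x\<bar> + 1) * exp \<bar>t\<bar>)) * exp (pi/2 * R)"
    using poly_exp_bound[of "\<bar>x\<bar> + 1" R t] R by (intro mult_right_mono mult_left_mono) auto
  also have "\<dots> = Kp x R * exp \<bar>t\<bar>" by (simp add: Kp_def mult_ac)
  finally show ?thesis .
qed

lemma sin_pi_lower:
  "\<bar>sin (pi * x)\<bar> / 2 * exp (pi * \<bar>t\<bar>) \<le> norm (sin (pi * Complex x t))"
proof -
  have "\<bar>sin (pi * x)\<bar> / 2 * exp (pi * \<bar>t\<bar>) \<le> \<bar>sin (pi * x)\<bar> * cosh (pi * t)"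
  proof -
    have e: "exp (pi*\<bar>t\<bar>) \<le> 2 * cosh (pi*t)" using exp_abs_le_cosh[of "pi*t"] by (simp add: abs_mult)
    show ?thesis using mult_left_mono[OF e, of "\<bar>sin (pi * x)\<bar>"] by (simp add: mult_ac)
  qed
  also have "\<dots> \<le> norm (sin (pi * Complex x t))"
    using norm_sin_lower1[of "pi * Complex x t"] by simp
  finally show ?thesis .
qed

definition KG :: "real \<Rightarrow> real \<Rightarrow> real" where
  "KG x R = Kp x R / (\<bar>sin (pi * x)\<bar> / 2)"

lemma G_bound:
  assumes "0 < x" "sin (pi * x) \<noteq> 0" "\<bar>Re w\<bar> \<le> R" "\<bar>Im w\<bar> \<le> R"
  shows "norm (Complex x t powr (-w) / sin (pi * Complex x t)) \<le> KG x R * exp (- \<bar>t\<bar>)"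
  unfolding norm_divide KG_def
  by (rule ratio_bound[OF _ powr_exp_bound[OF assms(1,3,4)] sin_pi_lower]) (use assms in auto)

definition KF :: "real \<Rightarrow> real \<Rightarrow> real" where
  "KF x R = Kp x R / ((\<bar>sin (pi * x)\<bar> / 2) * \<bar>sin (pi * x)\<bar>)"

lemma F_bound:
  assumes "0 < x" "sin (pi * x) \<noteq> 0" "\<bar>Re w\<bar> \<le> R" "\<bar>Im w\<bar> \<le> R"
  shows "norm (Complex x t powr (-w) * cos (pi * Complex x t) / (sin (pi * Complex x t))\<^sup>2)
           \<le> KF x R * exp (- \<bar>t\<bar>)"
proof -
  let ?z = "pi * Complex x t"
  have c: "norm (cos ?z) \<le> cosh (pi * t)" using norm_cos_upper[of ?z] by simp
  have s1: "\<bar>sin (pi * x)\<bar> * cosh (pi * t) \<le> norm (sin ?z)"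
    using norm_sin_lower1[of ?z] by simp
  have cpos: "0 < cosh (pi * t)" by simp
  have "norm (cos ?z) / norm (sin ?z) ^ 2 \<le> cosh (pi * t) / (\<bar>sin (pi * x)\<bar> * cosh (pi * t)) ^ 2"
  proof (rule frac_le)
    show "0 < (\<bar>sin (pi * x)\<bar> * cosh (pi * t))\<^sup>2" using assms cpos by simp
    show "(\<bar>sin (pi * x)\<bar> * cosh (pi * t))\<^sup>2 \<le> (norm (sin ?z))\<^sup>2"
      using s1 assms cpos by (intro power_mono) auto
  qed (use c in auto)
  also have "\<dots> = 1 / (\<bar>sin (pi * x)\<bar> * (\<bar>sin (pi * x)\<bar> * cosh (pi * t)))"
    using cpos by (simp add: power2_eq_square field_simps)
  finally have cs: "norm (cos ?z) / norm (sin ?z) ^ 2 \<le> 1 / (\<bar>sin (pi * x)\<bar> * (\<bar>sin (pi * x)\<bar> * cosh (pi * t)))" .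
  have "norm (Complex x t powr (-w) * cos ?z / (sin ?z)\<^sup>2) = norm (Complex x t powr (-w)) * (norm (cos ?z) / norm (sin ?z) ^ 2)"
    by (simp add: norm_divide norm_mult norm_power)
  also have "\<dots> \<le> norm (Complex x t powr (-w)) * (1 / (\<bar>sin (pi * x)\<bar> * (\<bar>sin (pi * x)\<bar> * cosh (pi * t))))"
    by (intro mult_left_mono cs) auto
  also have "\<dots> = norm (Complex x t powr (-w)) / (\<bar>sin (pi * x)\<bar> * (\<bar>sin (pi * x)\<bar> * cosh (pi * t)))"
    by simp
  also have "\<dots> \<le> (Kp x R / ((\<bar>sin (pi * x)\<bar> / 2) * \<bar>sin (pi * x)\<bar>)) * exp (- \<bar>t\<bar>)"
  proof (rule ratio_bound[OF _ powr_exp_bound[OF assms(1,3,4)]])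
    show "(\<bar>sin (pi * x)\<bar> / 2 * \<bar>sin (pi * x)\<bar>) * exp (pi * \<bar>t\<bar>) \<le> \<bar>sin (pi * x)\<bar> * (\<bar>sin (pi * x)\<bar> * cosh (pi * t))"
    proof -
      have e: "exp (pi*\<bar>t\<bar>) \<le> 2 * cosh (pi*t)" using exp_abs_le_cosh[of "pi*t"] by (simp add: abs_mult)
      show ?thesis using mult_left_mono[OF e, of "\<bar>sin (pi * x)\<bar> * \<bar>sin (pi * x)\<bar>"] by (simp add: mult_ac)
    qed
  qed (use assms in \<open>auto simp: zero_less_mult_iff\<close>)
  finally show ?thesis by (simp add: KF_def)
qed


lemma diff_restrict_integrable:
  fixes f :: "real \<Rightarrow> 'a::euclidean_space"
  assumes "f integrable_on UNIV"
  shows "(\<lambda>t. if t \<in> {a..b} then 0 else f t) integrable_on UNIV"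
proof -
  have "f integrable_on {a..b}" using assms integrable_on_subcbox[of f UNIV a b] by simp
  hence r: "(\<lambda>t. if t \<in> {a..b} then f t else 0) integrable_on UNIV"
    by (simp only: integrable_restrict_UNIV)
  have "(\<lambda>t. f t - (if t \<in> {a..b} then f t else 0)) integrable_on UNIV"
    using assms r by (rule integrable_diff)
  thus ?thesis by (rule integrable_eq) auto
qed

lemma integral_diff_restrict:
  fixes f :: "real \<Rightarrow> 'a::euclidean_space"
  assumes "f integrable_on UNIV"
  shows "integral UNIV f - integral {a..b} f = integral UNIV (\<lambda>t. if t \<in> {a..b} then 0 else f t)"
proof -
  have "f integrable_on {a..b}" using assms integrable_on_subcbox[of f UNIV a b] by simp
  hence r: "(\<lambda>t. if t \<in> {a..b} then f t else 0) integrable_on UNIV"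
    by (simp only: integrable_restrict_UNIV)
  have "integral {a..b} f = integral UNIV (\<lambda>t. if t \<in> {a..b} then f t else 0)"
    by (simp only: integral_restrict_UNIV)
  hence "integral UNIV f - integral {a..b} f = integral UNIV (\<lambda>t. f t - (if t \<in> {a..b} then f t else 0))"
    using assms r by (simp add: integral_diff)
  also have "\<dots> = integral UNIV (\<lambda>t. if t \<in> {a..b} then 0 else f t)"
    by (rule integral_cong) auto
  finally show ?thesis .
qed

lemma tail_tendsto:
  fixes h :: "real \<Rightarrow> real"
  assumes "h integrable_on UNIV" "\<And>t. 0 \<le> h t"
  shows "(\<lambda>n::nat. integral UNIV (\<lambda>t. if t \<in> {-real n..real n} then 0 else h t)) \<longlonglongrightarrow> 0"
proof -
  define F where "F = (\<lambda>(n::nat) t. if t \<in> {-real n..real n} then 0 else h t)"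
  have p1: "\<And>n. F n integrable_on UNIV"
    unfolding F_def using assms(1) by (rule diff_restrict_integrable)
  have p3: "\<And>n t. t \<in> UNIV \<Longrightarrow> norm (F n t) \<le> h t"
    using assms(2) by (auto simp: F_def)
  have p4: "\<And>t. t \<in> UNIV \<Longrightarrow> (\<lambda>n. F n t) \<longlonglongrightarrow> (\<lambda>t. 0::real) t"
  proof -
    fix t :: real
    show "(\<lambda>n. F n t) \<longlonglongrightarrow> (\<lambda>t. 0::real) t"
    proof (rule tendsto_eventually)
      obtain N :: nat where "\<bar>t\<bar> \<le> real N" using real_arch_simple by blast
      hence "\<forall>n\<ge>N. t \<in> {-real n..real n}" by auto
      thus "eventually (\<lambda>n. F n t = (\<lambda>t. 0::real) t) sequentially"
        unfolding eventually_sequentially F_def by auto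
    qed
  qed
  have "(\<lambda>n. integral UNIV (F n)) \<longlonglongrightarrow> integral UNIV (\<lambda>t. 0::real)"
    using dominated_convergence(2)[OF p1 assms(1) p3 p4] by simp
  thus ?thesis by (simp add: F_def)
qed

lemma tail_norm_bound:
  fixes f :: "real \<Rightarrow> complex"
  assumes "f integrable_on UNIV" "h integrable_on UNIV" "\<And>t. norm (f t) \<le> h t"
  shows "norm (integral UNIV f - integral {a..b} f) \<le> integral UNIV (\<lambda>t. if t \<in> {a..b} then 0 else h t)"
  unfolding integral_diff_restrict[OF assms(1)]
  by (rule integral_norm_bound_integral[OF diff_restrict_integrable[OF assms(1)] diff_restrict_integrable[OF assms(2)]])
     (use assms in auto)

lemma integral_ivl_tendsto:
  fixes f :: "real \<Rightarrow> complex"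
  assumes "f integrable_on UNIV" "h integrable_on UNIV" "\<And>t. norm (f t) \<le> h t"
  shows "(\<lambda>n::nat. integral {-real n..real n} f) \<longlonglongrightarrow> integral UNIV f"
proof -
  have h0: "0 \<le> h t" for t using assms(3)[of t] norm_ge_zero order_trans by blast
  have "(\<lambda>n. integral UNIV f - integral {-real n..real n} f) \<longlonglongrightarrow> 0"
  proof (rule Lim_null_comparison[OF _ tail_tendsto[OF assms(2) h0]])
    show "eventually (\<lambda>n. norm (integral UNIV f - integral {-real n..real n} f) \<le> integral UNIV (\<lambda>t. if t \<in> {-real n..real n} then 0 else h t)) sequentially"
      using tail_norm_bound[OF assms] by simp
  qed
  hence "(\<lambda>n. integral UNIV f - (integral UNIV f - integral {-real n..real n} f)) \<longlonglongrightarrow> integral UNIV f - 0"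
    by (intro tendsto_diff) auto
  thus ?thesis by simp
qed


definition good :: "real \<Rightarrow> bool" where "good x \<longleftrightarrow> 0 < x \<and> sin (pi * x) \<noteq> 0"

definition gfun :: "real \<Rightarrow> complex \<Rightarrow> real \<Rightarrow> complex" where
  "gfun x w t = Complex x t powr (-w) / sin (pi * Complex x t)"

definition L :: "real \<Rightarrow> complex \<Rightarrow> complex" where
  "L x w = integral UNIV (gfun x w)"

lemma Complex_not_nonpos: "0 < x \<Longrightarrow> Complex x t \<notin> \<real>\<^sub>\<le>\<^sub>0"
  by (simp add: complex_nonpos_Reals_iff)

lemma Complex_nz: "0 < x \<Longrightarrow> Complex x t \<noteq> 0"
  by (simp add: complex_eq_iff)

lemma sin_Complex_nz: "good x \<Longrightarrow> sin (pi * Complex x t) \<noteq> 0"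
proof
  assume g: "good x" and s: "sin (pi * Complex x t) = 0"
  have "0 < \<bar>sin (pi * x)\<bar> / 2 * exp (pi * \<bar>t\<bar>)" using g by (simp add: good_def)
  also have "\<dots> \<le> norm (sin (pi * Complex x t))" by (rule sin_pi_lower)
  finally show False using s by simp
qed

lemma continuous_on_Complex [continuous_intros]:
  "continuous_on S f \<Longrightarrow> continuous_on S (\<lambda>p. Complex x (f p))"
  unfolding Complex_eq by (intro continuous_intros)

lemma gfun_exp: "0 < x \<Longrightarrow> gfun x w t = exp (-w * Ln (Complex x t)) / sin (pi * Complex x t)"
  by (simp add: gfun_def powr_def Complex_nz)

lemma gfun_cont: "good x \<Longrightarrow> continuous_on UNIV (gfun x w)"
proof -
  assume g: "good x"
  hence x: "0 < x" by (simp add: good_def)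
  have "continuous_on UNIV (\<lambda>t. exp (-w * Ln (Complex x t)) / sin (pi * Complex x t))"
    using g x by (intro continuous_intros) (auto simp: Complex_not_nonpos sin_Complex_nz)
  thus ?thesis using gfun_exp[OF x] by simp
qed

lemma gfun_bound:
  assumes "good x" "\<bar>Re w\<bar> \<le> R" "\<bar>Im w\<bar> \<le> R"
  shows "norm (gfun x w t) \<le> KG x R * exp (- \<bar>t\<bar>)"
  unfolding gfun_def using assms by (intro G_bound) (auto simp: good_def)

lemma gfun_integrable: "good x \<Longrightarrow> gfun x w integrable_on UNIV"
  by (rule integrable_by_exp_bound[OF gfun_cont gfun_bound[of x w "\<bar>Re w\<bar> + \<bar>Im w\<bar>"]]) auto

lemma L_holo: assumes "good x" shows "L x holomorphic_on UNIV"
proof -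
  have x: "0 < x" using assms by (simp add: good_def)
  have local: "L x holomorphic_on ball w0 1" for w0
  proof -
    define R where "R = \<bar>Re w0\<bar> + \<bar>Im w0\<bar> + 1"
    define K where "K = KG x R"
    have bnd: "norm (gfun x w t) \<le> K * exp (- \<bar>t\<bar>)" if "w \<in> cball w0 1" for w t
    proof -
      have d: "norm (w - w0) \<le> 1" using that by (simp add: dist_norm norm_minus_commute)
      have "\<bar>Re w\<bar> \<le> R" using abs_Re_le_cmod[of "w - w0"] d unfolding R_def by auto
      moreover have "\<bar>Im w\<bar> \<le> R" using abs_Im_le_cmod[of "w - w0"] d unfolding R_def by auto
      ultimately show ?thesis unfolding K_def by (intro gfun_bound assms)
    qed
    have hint: "(\<lambda>t. K * exp (- \<bar>t\<bar>)) integrable_on UNIV"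
      using exp_abs_integrable by (rule integrable_on_mult_right)
    define fn where "fn = (\<lambda>(n::nat) w. integral (cbox (-real n) (real n)) (gfun x w))"
    have holo: "fn n holomorphic_on UNIV" for n
      unfolding fn_def
    proof (rule leibniz_rule_holomorphic[where fx = "\<lambda>w t. - Ln (Complex x t) * exp (-w * Ln (Complex x t)) / sin (pi * Complex x t)"])
      show "((\<lambda>w. gfun x w t) has_field_derivative - Ln (Complex x t) * exp (-w * Ln (Complex x t)) / sin (pi * Complex x t)) (at w within UNIV)" for w t
        unfolding gfun_exp[OF x] using sin_Complex_nz[OF assms, of t] by (auto intro!: derivative_eq_intros)
      show "gfun x w integrable_on cbox (- real n) (real n)" for w
        using gfun_cont[OF assms, of w] by (intro integrable_continuous) (auto intro: continuous_on_subset)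
      show "continuous_on (UNIV \<times> cbox (- real n) (real n)) (\<lambda>(w, t). - Ln (Complex x t) * exp (-w * Ln (Complex x t)) / sin (pi * Complex x t))"
        using assms x by (auto simp: split_beta Complex_not_nonpos sin_Complex_nz intro!: continuous_intros)
    qed auto
    have ulim: "uniform_limit (cball w0 1) fn (L x) sequentially"
    proof (rule uniform_limitI)
      fix e :: real assume e: "0 < e"
      have "(\<lambda>n::nat. integral UNIV (\<lambda>t. if t \<in> {-real n..real n} then 0 else K * exp (- \<bar>t\<bar>))) \<longlonglongrightarrow> 0"
        by (rule tail_tendsto[OF hint]) (use bnd[of w0] in \<open>auto intro: order_trans[OF norm_ge_zero]\<close>)
      hence ev: "eventually (\<lambda>n. integral UNIV (\<lambda>t. if t \<in> {-real n..real n} then 0 else K * exp (- \<bar>t\<bar>)) < e) sequentially"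
        using e by (auto dest: order_tendstoD(2))
      show "eventually (\<lambda>n. \<forall>w\<in>cball w0 1. dist (fn n w) (L x w) < e) sequentially"
      proof (rule eventually_mono[OF ev], safe)
        fix n :: nat and w assume lt: "integral UNIV (\<lambda>t. if t \<in> {-real n..real n} then 0 else K * exp (- \<bar>t\<bar>)) < e"
          and w: "w \<in> cball w0 1"
        have "dist (fn n w) (L x w) = norm (integral UNIV (gfun x w) - integral {-real n..real n} (gfun x w))"
          by (simp add: fn_def L_def dist_norm norm_minus_commute)
        also have "\<dots> \<le> integral UNIV (\<lambda>t. if t \<in> {-real n..real n} then 0 else K * exp (- \<bar>t\<bar>))"
          by (rule tail_norm_bound[OF gfun_integrable[OF assms] hint bnd[OF w]])
        finally show "dist (fn n w) (L x w) < e" using lt by linarith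
      qed
    qed
    show ?thesis
    proof (rule holomorphic_uniform_limit[OF _ ulim])
      show "eventually (\<lambda>n. continuous_on (cball w0 1) (fn n) \<and> fn n holomorphic_on ball w0 1) sequentially"
      proof (intro always_eventually allI conjI)
        fix n
        show "continuous_on (cball w0 1) (fn n)"
          using holomorphic_on_imp_continuous_on[OF holo[of n]] by (rule continuous_on_subset) auto
        show "fn n holomorphic_on ball w0 1"
          using holo[of n] by (rule holomorphic_on_subset) auto
      qed
    qed auto
  qed
  show ?thesis
    unfolding holomorphic_on_def
  proof
    fix w :: complex assume "w \<in> UNIV"
    have "L x field_differentiable at w"
      using local[of w] by (rule holomorphic_on_imp_differentiable_at) auto
    thus "L x field_differentiable at w within UNIV" by simp
  qed
qed


lemma good_intro:
  assumes "0 < y" "\<And>i::int. y \<noteq> of_int i"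
  shows "good y"
  unfolding good_def
proof
  show "0 < y" by fact
  show "sin (pi * y) \<noteq> 0"
  proof
    assume "sin (pi * y) = 0"
    then obtain i :: int where "pi * y = of_int i * pi" by (auto simp: sin_zero_iff_int2)
    hence "y = of_int i" by simp
    thus False using assms(2) by blast
  qed
qed

lemma good_shift:
  assumes "0 < x" "x < 1"
  shows "good (x + real m)"
proof (rule good_intro)
  show "0 < x + real m" using assms by simp
  fix i :: int
  show "x + real m \<noteq> of_int i"
  proof
    assume "x + real m = of_int i"
    hence "x = of_int (i - int m)" by simp
    with assms have "(0::real) < of_int (i - int m)" "of_int (i - int m) < (1::real)" by simp_all
    hence "0 < i - int m" "i - int m < 1" by linarith+
    thus False by linarith
  qed
qed

lemma contour_integral_rectpath:
  assumes "continuous_on A f" "path_image (rectpath a1 a3) \<subseteq> A"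
  defines "a2 \<equiv> Complex (Re a3) (Im a1)" and "a4 \<equiv> Complex (Re a1) (Im a3)"
  shows "contour_integral (rectpath a1 a3) f =
           contour_integral (linepath a1 a2) f + contour_integral (linepath a2 a3) f +
           contour_integral (linepath a3 a4) f + contour_integral (linepath a4 a1) f"
proof -
  have pi: "path_image (rectpath a1 a3) = closed_segment a1 a2 \<union> closed_segment a2 a3 \<union> closed_segment a3 a4 \<union> closed_segment a4 a1"
    by (simp add: rectpath_def Let_def path_image_join a2_def a4_def Un_assoc)
  have ci: "f contour_integrable_on linepath p q" if "closed_segment p q \<subseteq> A" for p q
    by (rule contour_integrable_continuous_linepath, rule continuous_on_subset[OF assms(1) that])
  have i12: "f contour_integrable_on linepath a1 a2" and i23: "f contour_integrable_on linepath a2 a3"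
   and i34: "f contour_integrable_on linepath a3 a4" and i41: "f contour_integrable_on linepath a4 a1"
    using assms(2) unfolding pi by (auto intro!: ci)
  show ?thesis
    unfolding rectpath_def Let_def a2_def[symmetric] a4_def[symmetric]
    using i12 i23 i34 i41
    by (simp add: contour_integrable_joinI valid_path_join add.assoc)
qed

lemma exp_minus_nat_tendsto: "(\<lambda>n::nat. exp (- real n)) \<longlonglongrightarrow> 0"
proof -
  have "(\<lambda>n::nat. exp (-1::real) ^ n) \<longlonglongrightarrow> 0"
    by (rule LIMSEQ_power_zero) simp
  moreover have "exp (- real n) = exp (-1::real) ^ n" for n
    using exp_of_nat_mult[of n "-1::real"] by simp
  ultimately show ?thesis by simp
qed

lemma horiz_bound:
  assumes "0 < u" "u \<le> X" "1 \<le> X" "1 \<le> \<bar>T\<bar>"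
  shows "norm (Complex u T powr (-w) / sin (pi * Complex u T))
           \<le> 4 * (fact (nat \<lceil>\<bar>Re w\<bar>\<rceil>) * exp X * exp (pi/2 * \<bar>Im w\<bar>)) * exp (- \<bar>T\<bar>)"
proof -
  let ?z = "Complex u T"
  let ?R = "\<bar>Re w\<bar>"
  have nz1: "\<bar>T\<bar> \<le> norm ?z" using abs_Im_le_cmod[of ?z] by simp
  have nz2: "norm ?z \<le> X + \<bar>T\<bar>" using cmod_le_sum[of u T] assms by simp
  have "norm (?z powr (-w)) \<le> norm ?z powr (- Re w) * exp (pi/2 * \<bar>Im w\<bar>)"
    using assms by (intro norm_powr_Re_pos) simp
  also have "\<dots> \<le> (fact (nat \<lceil>?R\<rceil>) * exp X * exp \<bar>T\<bar>) * exp (pi/2 * \<bar>Im w\<bar>)"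
  proof (rule mult_right_mono)
    have "norm ?z powr (- Re w) \<le> 1 powr (-?R) * (X + \<bar>T\<bar>) powr ?R"
      by (rule powr_bound_gen) (use assms nz1 nz2 in auto)
    also have "\<dots> \<le> fact (nat \<lceil>?R\<rceil>) * exp X * exp \<bar>T\<bar>"
      using poly_exp_bound[of X ?R T] assms by simp
    finally show "norm ?z powr (- Re w) \<le> fact (nat \<lceil>?R\<rceil>) * exp X * exp \<bar>T\<bar>" .
  qed simp
  finally have A: "norm (?z powr (-w)) \<le> (fact (nat \<lceil>?R\<rceil>) * exp X * exp (pi/2 * \<bar>Im w\<bar>)) * exp \<bar>T\<bar>"
    by (simp add: mult_ac)
  have B: "1/4 * exp (pi * \<bar>T\<bar>) \<le> norm (sin (pi * ?z))"
  proof -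
    have e1: "exp (- (pi * \<bar>T\<bar>)) \<le> 1" by simp
    have e2: "2 \<le> exp (pi * \<bar>T\<bar>)"
    proof -
      have "2 \<le> 1 + pi * \<bar>T\<bar>" using mult_mono[of 1 pi 1 "\<bar>T\<bar>"] assms pi_gt3 by simp
      also have "\<dots> \<le> exp (pi * \<bar>T\<bar>)" by (rule exp_ge_add_one_self)
      finally show ?thesis .
    qed
    have "1/4 * exp (pi * \<bar>T\<bar>) \<le> (exp (pi * \<bar>T\<bar>) - exp (- (pi * \<bar>T\<bar>))) / 2"
    proof -
      have gen: "\<And>a b::real. b \<le> 1 \<Longrightarrow> 2 \<le> a \<Longrightarrow> 1/4*a \<le> (a-b)/2" by (simp add: field_simps)
      show ?thesis by (rule gen[OF e1 e2])
    qed
    also have "\<dots> = \<bar>sinh (pi * T)\<bar>"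
    proof -
      have "sinh (pi * \<bar>T\<bar>) = (exp (pi * \<bar>T\<bar>) - exp (- (pi * \<bar>T\<bar>))) / 2" by (simp add: sinh_def)
      moreover have "0 \<le> sinh (pi * \<bar>T\<bar>)" by simp
      moreover have "\<bar>sinh (pi * T)\<bar> = sinh (pi * \<bar>T\<bar>)"
      proof (cases "T \<ge> 0")
        case True thus ?thesis by simp
      next
        case False
        hence "pi * \<bar>T\<bar> = - (pi * T)" by simp
        hence "sinh (pi * \<bar>T\<bar>) = - sinh (pi * T)" by simp
        moreover have "0 \<le> sinh (pi * \<bar>T\<bar>)" by simp
        ultimately show ?thesis by linarith
      qed
      ultimately show ?thesis by simp
    qed
    also have "\<dots> \<le> norm (sin (pi * ?z))" using norm_sin_lower2[of "pi * ?z"] by simp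
    finally show ?thesis .
  qed
  have "norm (?z powr (-w) / sin (pi * ?z)) \<le> ((fact (nat \<lceil>?R\<rceil>) * exp X * exp (pi/2 * \<bar>Im w\<bar>)) / (1/4)) * exp (- \<bar>T\<bar>)"
    unfolding norm_divide by (rule ratio_bound[OF _ A B]) auto
  thus ?thesis by simp
qed


lemma sin_pi_zero: "sin (complex_of_real pi * z) = 0 \<Longrightarrow> \<exists>n::int. z = of_int n"
proof -
  assume "sin (complex_of_real pi * z) = 0"
  then obtain n :: int where "complex_of_real pi * z = of_real (of_int n * pi)" by (auto simp: sin_eq_0)
  hence "complex_of_real pi * z = complex_of_real pi * of_int n" by simp
  hence "z = of_int n" by simp
  thus ?thesis by blast
qed

lemma cos_pi_nat: "cos (complex_of_real pi * of_nat k) = (-1) ^ k"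
proof -
  have "complex_of_real pi * of_nat k = of_real (pi * real k)" by simp
  hence "cos (complex_of_real pi * of_nat k) = of_real (cos (pi * real k))" by (simp only: cos_of_real)
  thus ?thesis by simp
qed

lemma sin_pi_nat: "sin (complex_of_real pi * of_nat k) = 0"
proof -
  have "complex_of_real pi * of_nat k = of_real (pi * real k)" by simp
  hence "sin (complex_of_real pi * of_nat k) = of_real (sin (pi * real k))" by (simp only: sin_of_real)
  thus ?thesis by simp
qed

lemma shift_step:
  fixes x :: real and k :: nat and w :: complex
  assumes x: "0 < x" "x < 1" and k: "1 \<le> k"
  shows "L (x + real k) w - L (x + real (k - 1)) w = 2 * (-1) ^ k * (of_nat k) powr (-w)"
proof -
  define xl where "xl = x + real (k - 1)"
  define xr where "xr = x + real k"
  have xr_eq: "xr = xl + 1" using k by (simp add: xl_def xr_def)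
  have gl: "good xl" unfolding xl_def using x by (rule good_shift)
  have gr: "good xr" unfolding xr_def using x by (rule good_shift)
  have xl_bounds: "real k - 1 < xl" "xl < real k" using x k by (auto simp: xl_def)
  have xr_bounds: "real k < xr" "xr < real k + 1" using x k by (auto simp: xr_def)
  define Fz where "Fz = (\<lambda>z::complex. z powr (-w) / sin (complex_of_real pi * z))"
  have gfun_Fz: "gfun y w t = Fz (Complex y t)" for y t by (simp add: gfun_def Fz_def)
  have gfun_Fz': "gfun y w = (\<lambda>t. Fz (Complex y t))" for y by (rule ext) (simp add: gfun_Fz)
  define S where "S = {z. real k - 1 < Re z} \<inter> {z. Re z < real k + 1}"
  have S_open: "open S" unfolding S_def by (intro open_Int open_halfspace_Re_gt open_halfspace_Re_lt)
  have S_conn: "connected S" unfolding S_def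
    by (intro convex_connected convex_Int convex_halfspace_Re_gt convex_halfspace_Re_lt)
  have sin_nz: "sin (complex_of_real pi * z) \<noteq> 0" if "z \<in> S - {of_nat k}" for z
  proof
    assume "sin (complex_of_real pi * z) = 0"
    then obtain n :: int where n: "z = of_int n" using sin_pi_zero by blast
    with that have "real k - 1 < of_int n" "of_int n < real k + 1" by (auto simp: S_def)
    hence "n = int k" by linarith
    with n that show False by simp
  qed
  have S_pos: "0 < Re z" if "z \<in> S" for z using that k by (auto simp: S_def)
  have holo: "Fz holomorphic_on S - {of_nat k}"
    unfolding Fz_def
  proof (intro holomorphic_intros)
    show "z \<notin> \<real>\<^sub>\<le>\<^sub>0" if "z \<in> S - {of_nat k}" for z
      using S_pos[of z] that by (auto simp: complex_nonpos_Reals_iff)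
    show "sin (complex_of_real pi * z) \<noteq> 0" if "z \<in> S - {of_nat k}" for z
      using sin_nz that by blast
  qed
  have cont: "continuous_on (S - {of_nat k}) Fz"
    using holo by (rule holomorphic_on_imp_continuous_on)
  have res: "residue Fz (of_nat k) = (of_nat k) powr (-w) / (complex_of_real pi * (-1) ^ k)"
  proof -
    have "residue (\<lambda>z. (\<lambda>z. z powr (-w)) z / (\<lambda>z. sin (complex_of_real pi * z)) z) (of_nat k)
          = (\<lambda>z. z powr (-w)) (of_nat k) / (complex_of_real pi * cos (complex_of_real pi * of_nat k))"
    proof (rule residue_simple_pole_deriv[where s = "{z. 0 < Re z}"])
      show "(\<lambda>z. z powr (-w)) holomorphic_on {z. 0 < Re z}"
        by (intro holomorphic_intros) (auto simp: complex_nonpos_Reals_iff)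
      show "(\<lambda>z. sin (complex_of_real pi * z)) holomorphic_on {z. 0 < Re z}"
        by (intro holomorphic_intros)
      show "open {z. 0 < Re z}" by (rule open_halfspace_Re_gt)
      show "connected {z. 0 < Re z}" by (intro convex_connected convex_halfspace_Re_gt)
      show "of_nat k \<in> {z. 0 < Re z}" using k by simp
      show "((\<lambda>z. sin (complex_of_real pi * z)) has_field_derivative complex_of_real pi * cos (complex_of_real pi * of_nat k)) (at (of_nat k))"
        by (auto intro!: derivative_eq_intros)
      show "(of_nat k :: complex) powr (-w) \<noteq> 0" using k by (simp add: powr_def)
      show "sin (complex_of_real pi * of_nat k) = 0" by (rule sin_pi_nat)
      show "complex_of_real pi * cos (complex_of_real pi * of_nat k) \<noteq> 0" by (simp add: cos_pi_nat)
    qed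
    thus ?thesis by (simp add: Fz_def cos_pi_nat)
  qed
  define C where "C = 4 * (fact (nat \<lceil>\<bar>Re w\<bar>\<rceil>) * exp (real k + 1) * exp (pi/2 * \<bar>Im w\<bar>))"
  define R where "R = \<bar>Re w\<bar> + \<bar>Im w\<bar>"
  define C1 where "C1 = (\<lambda>n::nat. contour_integral (linepath (Complex xl (- real n)) (Complex xr (- real n))) Fz)"
  define C3 where "C3 = (\<lambda>n::nat. contour_integral (linepath (Complex xr (real n)) (Complex xl (real n))) Fz)"
  define Ir where "Ir = (\<lambda>n::nat. integral {-real n..real n} (gfun xr w))"
  define Il where "Il = (\<lambda>n::nat. integral {-real n..real n} (gfun xl w))"
  have eq: "C1 n + \<i> * Ir n + C3 n - \<i> * Il n = 2 * pi * \<i> * residue Fz (of_nat k)" if n: "1 \<le> n" for n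
  proof -
    define a1 where "a1 = Complex xl (- real n)"
    define a3 where "a3 = Complex xr (real n)"
    have box_k: "of_nat k \<in> box a1 a3" using xl_bounds xr_bounds n by (auto simp: a1_def a3_def in_box_complex_iff)
    have le: "Re a1 \<le> Re a3" "Im a1 \<le> Im a3" using xr_eq by (auto simp: a1_def a3_def)
    have cbox_S: "cbox a1 a3 \<subseteq> S"
      using xl_bounds xr_bounds by (auto simp: a1_def a3_def in_cbox_complex_iff S_def)
    have pi_sub: "path_image (rectpath a1 a3) \<subseteq> S - {of_nat k}"
      using path_image_rectpath_subset_cbox[OF le] cbox_S path_image_rectpath_inter_box[OF le] box_k by blast
    have "contour_integral (rectpath a1 a3) Fz =
            2 * pi * \<i> * (\<Sum>p\<in>{of_nat k}. winding_number (rectpath a1 a3) p * residue Fz p)"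
    proof (rule Residue_theorem[OF S_open S_conn _ holo])
      show "\<forall>z. z \<notin> S \<longrightarrow> winding_number (rectpath a1 a3) z = 0"
        using cbox_S by (auto intro!: winding_number_rectpath_outside[OF le])
    qed (use pi_sub in auto)
    also have "\<dots> = 2 * pi * \<i> * residue Fz (of_nat k)"
      using winding_number_rectpath[OF box_k] by simp
    finally have resid: "contour_integral (rectpath a1 a3) Fz = 2 * pi * \<i> * residue Fz (of_nat k)" .
    have split: "contour_integral (rectpath a1 a3) Fz =
           contour_integral (linepath a1 (Complex (Re a3) (Im a1))) Fz + contour_integral (linepath (Complex (Re a3) (Im a1)) a3) Fz +
           contour_integral (linepath a3 (Complex (Re a1) (Im a3))) Fz + contour_integral (linepath (Complex (Re a1) (Im a3)) a1) Fz"
      by (rule contour_integral_rectpath[OF cont pi_sub])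
    have e1: "contour_integral (linepath a1 (Complex (Re a3) (Im a1))) Fz = C1 n"
      by (simp add: C1_def a1_def a3_def)
    have e3: "contour_integral (linepath a3 (Complex (Re a1) (Im a3))) Fz = C3 n"
      by (simp add: C3_def a1_def a3_def)
    have e2: "contour_integral (linepath (Complex (Re a3) (Im a1)) a3) Fz = \<i> * Ir n"
    proof -
      have "contour_integral (linepath (Complex xr (- real n)) (Complex xr (real n))) Fz =
              \<i> * integral {- real n..real n} (\<lambda>t. Fz (Complex xr t))"
        by (rule contour_integral_linepath_same_Re) (use n in auto)
      thus ?thesis by (simp add: a1_def a3_def Ir_def gfun_Fz')
    qed
    have e4: "contour_integral (linepath (Complex (Re a1) (Im a3)) a1) Fz = - (\<i> * Il n)"
    proof -
      have seg: "closed_segment (Complex xl (real n)) (Complex xl (- real n)) \<subseteq> S - {of_nat k}"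
      proof -
        have "closed_segment (Complex (Re a1) (Im a3)) a1 \<subseteq> path_image (rectpath a1 a3)"
          by (simp add: rectpath_def Let_def path_image_join) blast
        thus ?thesis using pi_sub by (simp add: a1_def a3_def)
      qed
      have "contour_integral (linepath (Complex xl (real n)) (Complex xl (- real n))) Fz =
              - contour_integral (linepath (Complex xl (- real n)) (Complex xl (real n))) Fz"
        by (rule contour_integral_reverse_linepath, rule continuous_on_subset[OF cont seg])
      also have "contour_integral (linepath (Complex xl (- real n)) (Complex xl (real n))) Fz =
              \<i> * integral {- real n..real n} (\<lambda>t. Fz (Complex xl t))"
        by (rule contour_integral_linepath_same_Re) (use n in auto)
      finally show ?thesis by (simp add: a1_def a3_def Il_def gfun_Fz')
    qed
    show ?thesis using resid split e1 e2 e3 e4 by simp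
  qed
  have hseg: "closed_segment (Complex xl T) (Complex xr T) \<subseteq> S - {of_nat k}"
     and hbnd: "\<And>z. z \<in> closed_segment (Complex xl T) (Complex xr T) \<Longrightarrow> norm (Fz z) \<le> C * exp (- \<bar>T\<bar>)"
    if T: "1 \<le> \<bar>T\<bar>" for T
  proof -
    have cs: "closed_segment (Complex xl T) (Complex xr T) = {z. Im z = T \<and> Re z \<in> {xl..xr}}"
      using xr_eq by (simp add: closed_segment_same_Im closed_segment_eq_real_ivl)
    show "closed_segment (Complex xl T) (Complex xr T) \<subseteq> S - {of_nat k}"
      using xl_bounds xr_bounds T unfolding cs by (auto simp: S_def)
    fix z assume "z \<in> closed_segment (Complex xl T) (Complex xr T)"
    hence z: "Im z = T" "xl \<le> Re z" "Re z \<le> xr" unfolding cs by auto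
    have zz: "z = Complex (Re z) T" using z by (simp add: complex_eq_iff)
    have "0 < Re z" using z xl_bounds k by linarith
    moreover have "Re z \<le> real k + 1" using z xr_bounds by linarith
    ultimately have "norm (Complex (Re z) T powr (-w) / sin (pi * Complex (Re z) T)) \<le> C * exp (- \<bar>T\<bar>)"
      unfolding C_def using T by (intro horiz_bound) auto
    thus "norm (Fz z) \<le> C * exp (- \<bar>T\<bar>)" by (subst zz) (simp add: Fz_def)
  qed
  have bC: "norm (contour_integral (linepath (Complex xl T) (Complex xr T)) Fz) \<le> C * exp (- \<bar>T\<bar>)"
    if T: "1 \<le> \<bar>T\<bar>" for T
  proof -
    have ci: "Fz contour_integrable_on linepath (Complex xl T) (Complex xr T)"
      by (rule contour_integrable_continuous_linepath, rule continuous_on_subset[OF cont hseg[OF T]])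
    have "norm (contour_integral (linepath (Complex xl T) (Complex xr T)) Fz) \<le> C * exp (- \<bar>T\<bar>) * norm (Complex xr T - Complex xl T)"
      by (rule has_contour_integral_bound_linepath[OF has_contour_integral_integral[OF ci]])
         (use hbnd[OF T] in \<open>auto simp: C_def\<close>)
    also have "norm (Complex xr T - Complex xl T) = 1" using xr_eq by (simp add: complex_eq_iff cmod_def)
    finally show ?thesis by simp
  qed
  have bC1: "norm (C1 n) \<le> C * exp (- real n)" if "1 \<le> n" for n
    using bC[of "- real n"] that by (simp add: C1_def)
  have bC3: "norm (C3 n) \<le> C * exp (- real n)" if "1 \<le> n" for n
  proof -
    have seg: "closed_segment (Complex xl (real n)) (Complex xr (real n)) \<subseteq> S - {of_nat k}"
      using hseg[of "real n"] that by simp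
    have "C3 n = - contour_integral (linepath (Complex xl (real n)) (Complex xr (real n))) Fz"
      unfolding C3_def
      by (rule contour_integral_reverse_linepath, rule continuous_on_subset[OF cont], simp add: closed_segment_commute seg)
    thus ?thesis using bC[of "real n"] that by simp
  qed
  have Cto0: "(\<lambda>n. C * exp (- real n)) \<longlonglongrightarrow> 0"
    using tendsto_mult_left[OF exp_minus_nat_tendsto, of C] by simp
  have C1to0: "C1 \<longlonglongrightarrow> 0"
    by (rule Lim_null_comparison[OF _ Cto0]) (auto simp: eventually_sequentially intro!: exI[of _ 1] bC1)
  have C3to0: "C3 \<longlonglongrightarrow> 0"
    by (rule Lim_null_comparison[OF _ Cto0]) (auto simp: eventually_sequentially intro!: exI[of _ 1] bC3)
  have hint: "(\<lambda>t::real. K * exp (- \<bar>t\<bar>)) integrable_on UNIV" for K :: real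
    using exp_abs_integrable by (rule integrable_on_mult_right)
  have Irto: "Ir \<longlonglongrightarrow> L xr w"
    unfolding Ir_def L_def
    by (rule integral_ivl_tendsto[OF gfun_integrable[OF gr] hint gfun_bound[OF gr, of w R]]) (auto simp: R_def)
  have Ilto: "Il \<longlonglongrightarrow> L xl w"
    unfolding Il_def L_def
    by (rule integral_ivl_tendsto[OF gfun_integrable[OF gl] hint gfun_bound[OF gl, of w R]]) (auto simp: R_def)
  have lim1: "(\<lambda>n. C1 n + \<i> * Ir n + C3 n - \<i> * Il n) \<longlonglongrightarrow> 0 + \<i> * L xr w + 0 - \<i> * L xl w"
    by (intro tendsto_intros C1to0 C3to0 Irto Ilto)
  have lim2: "(\<lambda>n. C1 n + \<i> * Ir n + C3 n - \<i> * Il n) \<longlonglongrightarrow> 2 * pi * \<i> * residue Fz (of_nat k)"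
  proof (rule tendsto_eventually)
    show "eventually (\<lambda>n. C1 n + \<i> * Ir n + C3 n - \<i> * Il n = 2 * pi * \<i> * residue Fz (of_nat k)) sequentially"
      unfolding eventually_sequentially using eq by blast
  qed
  have "\<i> * L xr w - \<i> * L xl w = 2 * pi * \<i> * residue Fz (of_nat k)"
    using LIMSEQ_unique[OF lim1 lim2] by simp
  hence "L xr w - L xl w = 2 * pi * residue Fz (of_nat k)"
    by (simp add: right_diff_distrib[symmetric])
  also have "\<dots> = 2 * (of_nat k powr (-w)) / (-1) ^ k" by (simp add: res)
  also have "\<dots> = 2 * (-1) ^ k * (of_nat k) powr (-w)"
  proof -
    have "((-1::complex) ^ k) * (-1) ^ k = 1" by (simp add: power_mult_distrib[symmetric])
    thus ?thesis by (simp add: field_simps)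
  qed
  finally show ?thesis by (simp add: xl_def xr_def)
qed


lemma sin_shift_abs: "\<bar>sin (pi * (x + real n))\<bar> = \<bar>sin (pi * x)\<bar>"
proof -
  have "sin (pi * (x + real n)) = sin (pi * x) * cos (pi * real n)"
    by (simp add: distrib_left sin_add)
  thus ?thesis by (simp add: abs_mult)
qed

lemma L_limit_zero:
  assumes x: "0 < x" "x < 1" and w: "0 < Re w"
  shows "(\<lambda>n::nat. L (x + real n) w) \<longlonglongrightarrow> 0"
proof -
  define E where "E = exp (pi/2 * \<bar>Im w\<bar>)"
  define K2 where "K2 = \<bar>sin (pi * x)\<bar> / 2"
  define I0 where "I0 = integral UNIV (\<lambda>t::real. exp (- \<bar>t\<bar>))"
  have gx: "good x" using good_shift[OF x, of 0] by simp
  have K2: "0 < K2" using gx by (simp add: K2_def good_def)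
  have bnd: "norm (L (x + real n) w) \<le> ((x + real n) powr (- Re w) * E / K2) * I0" for n
  proof -
    define y where "y = x + real n"
    have gy: "good y" unfolding y_def by (rule good_shift[OF x])
    have y0: "0 < y" using x by (simp add: y_def)
    have pt: "norm (gfun y w t) \<le> (y powr (- Re w) * E / K2) * exp (- \<bar>t\<bar>)" for t
    proof -
      let ?z = "Complex y t"
      have "norm (?z powr (-w)) \<le> norm ?z powr (- Re w) * E"
        unfolding E_def using y0 by (intro norm_powr_Re_pos) simp
      also have "\<dots> \<le> y powr (- Re w) * E"
      proof (rule mult_right_mono)
        have "y \<le> norm ?z" using abs_Re_le_cmod[of ?z] y0 by simp
        thus "norm ?z powr (- Re w) \<le> y powr (- Re w)"
          using w y0 by (intro powr_mono2') auto
      qed (simp add: E_def)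
      also have "\<dots> \<le> y powr (- Re w) * E * exp \<bar>t\<bar>"
        using mult_left_mono[of 1 "exp \<bar>t\<bar>" "y powr (- Re w) * E"] by (simp add: E_def)
      finally have A: "norm (?z powr (-w)) \<le> y powr (- Re w) * E * exp \<bar>t\<bar>" .
      have B: "K2 * exp (pi * \<bar>t\<bar>) \<le> norm (sin (pi * ?z))"
        using sin_pi_lower[of y t] unfolding K2_def y_def by (simp add: sin_shift_abs)
      show ?thesis unfolding gfun_def norm_divide
        by (rule ratio_bound[OF _ A B K2]) simp
    qed
    have hint: "(\<lambda>t::real. (y powr (- Re w) * E / K2) * exp (- \<bar>t\<bar>)) integrable_on UNIV"
      using exp_abs_integrable by (rule integrable_on_mult_right)
    have "norm (L y w) \<le> integral UNIV (\<lambda>t::real. (y powr (- Re w) * E / K2) * exp (- \<bar>t\<bar>))"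
      unfolding L_def by (rule integral_norm_bound_integral[OF gfun_integrable[OF gy] hint pt])
    also have "\<dots> = (y powr (- Re w) * E / K2) * I0"
      unfolding I0_def by (rule integral_mult_right)
    finally show ?thesis by (simp add: y_def)
  qed
  have "(\<lambda>n::nat. (x + real n) powr (- Re w)) \<longlonglongrightarrow> 0"
  proof (rule tendsto_neg_powr)
    show "- Re w < 0" using w by simp
    show "filterlim (\<lambda>n::nat. x + real n) at_top sequentially"
      by (intro filterlim_tendsto_add_at_top[OF tendsto_const] filterlim_real_sequentially)
  qed
  hence "(\<lambda>n::nat. ((x + real n) powr (- Re w) * E / K2) * I0) \<longlonglongrightarrow> ((0 * E / K2) * I0)"
    by (intro tendsto_intros) (use K2 in auto)
  hence lim0: "(\<lambda>n::nat. ((x + real n) powr (- Re w) * E / K2) * I0) \<longlonglongrightarrow> 0" by simp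
  show ?thesis
    by (rule Lim_null_comparison[OF _ lim0]) (use bnd in auto)
qed

lemma L_telescope:
  assumes x: "0 < x" "x < 1"
  shows "L (x + real n) w = L x w + 2 * (\<Sum>j<n. (-1) ^ (Suc j) * (of_nat (Suc j)) powr (-w))"
proof (induction n)
  case 0 thus ?case by simp
next
  case (Suc n)
  have "L (x + real (Suc n)) w - L (x + real (Suc n - 1)) w = 2 * (-1) ^ (Suc n) * (of_nat (Suc n)) powr (-w)"
    by (rule shift_step[OF x]) simp
  hence "L (x + real (Suc n)) w = L (x + real n) w + 2 * (-1) ^ (Suc n) * (of_nat (Suc n)) powr (-w)"
    by (simp add: algebra_simps)
  also have "\<dots> = L x w + 2 * (\<Sum>j<Suc n. (-1) ^ (Suc j) * (of_nat (Suc j)) powr (-w))"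
    using Suc.IH by (simp add: algebra_simps)
  finally show ?case .
qed

lemma L_sums:
  assumes x: "0 < x" "x < 1" and w: "0 < Re w"
  shows "(\<lambda>k::nat. (-1) ^ k / (of_nat (Suc k)) powr w) sums (L x w / 2)"
  unfolding sums_def
proof -
  have eq: "(\<Sum>k<n. (-1) ^ k / (of_nat (Suc k) :: complex) powr w) = L x w / 2 - L (x + real n) w / 2" for n
  proof -
    have "(\<Sum>k<n. (-1) ^ k / (of_nat (Suc k) :: complex) powr w) = - (\<Sum>j<n. (-1) ^ (Suc j) * (of_nat (Suc j)) powr (-w))"
      by (simp add: sum_negf[symmetric] powr_minus divide_inverse)
    also have "\<dots> = L x w / 2 - L (x + real n) w / 2"
      unfolding L_telescope[OF x, of n w] by (simp add: field_simps)
    finally show ?thesis .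
  qed
  have "(\<lambda>n. L x w / 2 - L (x + real n) w / 2) \<longlonglongrightarrow> L x w / 2 - 0 / 2"
    by (intro tendsto_intros L_limit_zero[OF x w]) simp_all
  thus "(\<lambda>n. \<Sum>k<n. (-1) ^ k / (of_nat (Suc k)) powr w) \<longlonglongrightarrow> L x w / 2"
    unfolding eq by simp
qed

lemma eta_eq:
  assumes c: "0 < c" "c < 1"
  shows "dirichlet_eta = (\<lambda>w. L c w / 2)"
proof -
  define P where "P = (\<lambda>f. f holomorphic_on UNIV \<and>
      (\<forall>z. 0 < Re z \<longrightarrow> (\<lambda>k::nat. (-1) ^ k / (of_nat (Suc k)) powr z) sums f z))"
  have gc: "good c" using good_shift[OF c, of 0] by simp
  have Pc: "P (\<lambda>w. L c w / 2)"
    unfolding P_def using L_holo[OF gc] L_sums[OF c]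
    by (auto intro!: holomorphic_intros)
  have uniq: "f = g" if "P f" "P g" for f g
  proof
    fix z
    show "f z = g z"
    proof (rule analytic_continuation_open[of "{z. 0 < Re z}" UNIV f g])
      show "open {z. 0 < Re z}" by (rule open_halfspace_Re_gt)
      show "{z. 0 < Re z} \<noteq> {}" by (auto intro!: exI[of _ 1])
      show "f z = g z" if "z \<in> {z. 0 < Re z}" for z
        using \<open>P f\<close> \<open>P g\<close> that unfolding P_def by (auto intro: sums_unique2)
    qed (use \<open>P f\<close> \<open>P g\<close> in \<open>auto simp: P_def\<close>)
  qed
  have "(THE f. P f) = (\<lambda>w. L c w / 2)"
  proof (rule the1_equality)
    show "\<exists>!f. P f" using Pc uniq by blast
    show "P (\<lambda>w. L c w / 2)" by (rule Pc)
  qed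
  thus ?thesis unfolding dirichlet_eta_def P_def .
qed


definition fs :: "real \<Rightarrow> complex \<Rightarrow> real \<Rightarrow> complex" where
  "fs c s t = Complex c t powr (-s) * cos (pi * Complex c t) / (sin (pi * Complex c t))\<^sup>2"

lemma fs_cont: "good c \<Longrightarrow> continuous_on UNIV (fs c s)"
proof -
  assume g: "good c"
  hence x: "0 < c" by (simp add: good_def)
  have "continuous_on UNIV (\<lambda>t. exp (-s * Ln (Complex c t)) * cos (pi * Complex c t) / (sin (pi * Complex c t))\<^sup>2)"
    using g x by (intro continuous_intros) (auto simp: Complex_not_nonpos sin_Complex_nz)
  moreover have "fs c s = (\<lambda>t. exp (-s * Ln (Complex c t)) * cos (pi * Complex c t) / (sin (pi * Complex c t))\<^sup>2)"
    using x by (auto simp: fs_def powr_def Complex_nz)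
  ultimately show ?thesis by simp
qed

lemma fs_integrable: "good c \<Longrightarrow> fs c s integrable_on UNIV"
  by (rule integrable_by_exp_bound[OF fs_cont, of c s "KF c (\<bar>Re s\<bar> + \<bar>Im s\<bar>)"])
     (auto simp: fs_def good_def intro!: F_bound)

definition Phi :: "complex \<Rightarrow> complex \<Rightarrow> complex" where
  "Phi (s::complex) (z::complex) = z powr (-s) / sin (complex_of_real pi * z)"

definition Phi' :: "complex \<Rightarrow> complex \<Rightarrow> complex" where
  "Phi' (s::complex) (z::complex) = - s * (z powr (-s - 1) / sin (complex_of_real pi * z)) - complex_of_real pi * (z powr (-s) * cos (complex_of_real pi * z) / (sin (complex_of_real pi * z))\<^sup>2)"

lemma Phi_deriv:
  fixes z s :: complex
  assumes "z \<notin> \<real>\<^sub>\<le>\<^sub>0" "sin (pi * z) \<noteq> 0"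
  shows "(Phi s has_field_derivative Phi' s z) (at z)"
proof -
  have d1: "((\<lambda>z. z powr (-s)) has_field_derivative (-s * z powr (-s - 1))) (at z)"
    by (rule has_field_derivative_powr[OF assms(1)])
  have d2: "((\<lambda>z. sin (pi * z)) has_field_derivative (cos (pi * z) * pi)) (at z)"
    by (auto intro!: derivative_eq_intros)
  have "((\<lambda>z. z powr (-s) / sin (pi * z)) has_field_derivative
          ((-s * z powr (-s - 1)) * sin (pi * z) - z powr (-s) * (cos (pi * z) * pi)) / (sin (pi * z) * sin (pi * z))) (at z)"
    by (rule DERIV_divide[OF d1 d2 assms(2)])
  moreover have "((-s * z powr (-s - 1)) * sin (pi * z) - z powr (-s) * (cos (pi * z) * pi)) / (sin (pi * z) * sin (pi * z)) = Phi' s z"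
    using assms(2) by (simp add: Phi'_def field_simps power2_eq_square)
  ultimately show ?thesis by (simp add: Phi_def[abs_def])
qed

lemma U_vderiv:
  assumes "good c"
  shows "((\<lambda>t. Phi s (Complex c t)) has_vector_derivative (\<i> * Phi' s (Complex c t))) (at t within A)"
proof -
  have c: "0 < c" using assms by (simp add: good_def)
  have eq: "Complex c t' = of_real c + \<i> * of_real t'" for t' by (simp add: Complex_eq)
  have "((\<lambda>\<zeta>. Phi s (of_real c + \<i> * \<zeta>)) has_field_derivative (Phi' s (of_real c + \<i> * of_real t) * \<i>)) (at (of_real t))"
  proof (rule DERIV_chain2[where f = "Phi s"])
    show "(Phi s has_field_derivative Phi' s (of_real c + \<i> * of_real t)) (at (of_real c + \<i> * of_real t))"
      using Phi_deriv[of "of_real c + \<i> * of_real t" s] Complex_not_nonpos[OF c, of t] sin_Complex_nz[OF assms, of t]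
      by (simp add: eq)
    show "((\<lambda>\<zeta>. of_real c + \<i> * \<zeta>) has_field_derivative \<i>) (at (of_real t))"
      by (auto intro!: derivative_eq_intros)
  qed
  hence "((\<lambda>t'. Phi s (of_real c + \<i> * of_real t')) has_vector_derivative (Phi' s (of_real c + \<i> * of_real t) * \<i>)) (at t within A)"
    by (rule has_vector_derivative_real_field)
  thus ?thesis by (simp add: eq mult.commute)
qed

lemma ibp:
  assumes c: "0 < c" "c < 1"
  shows "integral UNIV (fs c s) = - (s / pi) * L c (s + 1)"
proof -
  have gc: "good c" using good_shift[OF c, of 0] by simp
  define U where "U = (\<lambda>t. Phi s (Complex c t))"
  have U_gfun: "U t = gfun c s t" for t by (simp add: U_def Phi_def gfun_def)
  have d: "\<i> * Phi' s (Complex c t) = - \<i> * s * gfun c (s+1) t - \<i> * pi * fs c s t" for t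
  proof -
    have m: "- s - 1 = - 1 - s" by simp
    show ?thesis by (simp add: Phi'_def gfun_def fs_def algebra_simps m)
  qed
  define Ig where "Ig = (\<lambda>n::nat. integral {-real n..real n} (gfun c (s+1)))"
  define If where "If = (\<lambda>n::nat. integral {-real n..real n} (fs c s))"
  have intg: "gfun c (s+1) integrable_on {a..b}" for a b
    using integrable_on_subcbox[OF gfun_integrable[OF gc, of "s+1"], of a b] by simp
  have intf: "fs c s integrable_on {a..b}" for a b
    using integrable_on_subcbox[OF fs_integrable[OF gc, of s], of a b] by simp
  have eqn: "- \<i> * s * Ig n - \<i> * pi * If n = U (real n) - U (- real n)" for n
  proof -
    have "((\<lambda>t. \<i> * Phi' s (Complex c t)) has_integral (U (real n) - U (- real n))) {-real n..real n}"
      unfolding U_def by (rule fundamental_theorem_of_calculus) (auto intro: U_vderiv[OF gc])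
    hence "((\<lambda>t. - \<i> * s * gfun c (s+1) t - \<i> * pi * fs c s t) has_integral (U (real n) - U (- real n))) {-real n..real n}"
      by (simp add: d)
    moreover have "((\<lambda>t. - \<i> * s * gfun c (s+1) t - \<i> * pi * fs c s t) has_integral (- \<i> * s * Ig n - \<i> * pi * If n)) {-real n..real n}"
      unfolding Ig_def If_def
      by (intro has_integral_diff has_integral_mult_right integrable_integral intg intf)
    ultimately show ?thesis by (rule has_integral_unique[symmetric])
  qed
  have hint: "(\<lambda>t::real. K * exp (- \<bar>t\<bar>)) integrable_on UNIV" for K :: real
    using exp_abs_integrable by (rule integrable_on_mult_right)
  define R where "R = \<bar>Re (s+1)\<bar> + \<bar>Im (s+1)\<bar>"
  define R' where "R' = \<bar>Re s\<bar> + \<bar>Im s\<bar>"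
  have Igto: "Ig \<longlonglongrightarrow> L c (s+1)"
    unfolding Ig_def L_def
    by (rule integral_ivl_tendsto[OF gfun_integrable[OF gc] hint gfun_bound[OF gc, of "s+1" R]]) (auto simp: R_def)
  have Ifto: "If \<longlonglongrightarrow> integral UNIV (fs c s)"
    unfolding If_def
    by (rule integral_ivl_tendsto[OF fs_integrable[OF gc] hint, of _ "KF c R'"])
       (use gc in \<open>auto simp: fs_def good_def R'_def intro!: F_bound\<close>)
  have Ubnd: "norm (U t) \<le> KG c R' * exp (- \<bar>t\<bar>)" for t
    unfolding U_gfun by (rule gfun_bound[OF gc]) (auto simp: R'_def)
  have e0: "(\<lambda>n. KG c R' * exp (- real n)) \<longlonglongrightarrow> 0"
    using tendsto_mult_left[OF exp_minus_nat_tendsto, of "KG c R'"] by simp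
  have ev1: "\<forall>n::nat. norm (U (real n)) \<le> KG c R' * exp (- real n)"
  proof
    fix n :: nat show "norm (U (real n)) \<le> KG c R' * exp (- real n)" using Ubnd[of "real n"] by simp
  qed
  have ev2: "\<forall>n::nat. norm (U (- real n)) \<le> KG c R' * exp (- real n)"
  proof
    fix n :: nat show "norm (U (- real n)) \<le> KG c R' * exp (- real n)" using Ubnd[of "- real n"] by simp
  qed
  have Up: "(\<lambda>n. U (real n)) \<longlonglongrightarrow> 0"
    by (rule Lim_null_comparison[OF always_eventually[OF ev1] e0])
  have Um: "(\<lambda>n. U (- real n)) \<longlonglongrightarrow> 0"
    by (rule Lim_null_comparison[OF always_eventually[OF ev2] e0])
  have lim1: "(\<lambda>n. - \<i> * s * Ig n - \<i> * pi * If n) \<longlonglongrightarrow> - \<i> * s * L c (s+1) - \<i> * pi * integral UNIV (fs c s)"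
    by (intro tendsto_intros Igto Ifto)
  have lim2: "(\<lambda>n. - \<i> * s * Ig n - \<i> * pi * If n) \<longlonglongrightarrow> 0 - 0"
    unfolding eqn by (intro tendsto_intros Up Um)
  have "- \<i> * s * L c (s+1) - \<i> * pi * integral UNIV (fs c s) = 0"
    using LIMSEQ_unique[OF lim1 lim2] by simp
  moreover have "\<i> * (pi * integral UNIV (fs c s) + s * L c (s+1)) = - (- \<i> * s * L c (s+1) - \<i> * pi * integral UNIV (fs c s))"
    by (simp add: algebra_simps)
  ultimately have "\<i> * (pi * integral UNIV (fs c s) + s * L c (s+1)) = 0"
    by simp
  hence "pi * integral UNIV (fs c s) + s * L c (s+1) = 0" by simp
  hence "pi * integral UNIV (fs c s) = - s * L c (s+1)" by (simp add: add_eq_0_iff)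
  thus ?thesis by (simp add: field_simps)
qed

theorem mainTheorem4:
  fixes c :: real and s :: complex
  assumes "0 < c" and "c < 1" and "s \<noteq> 0"
  shows "(\<lambda>t::real. (Complex c t) powr (-s) * cos (pi * Complex c t) / (sin (pi * Complex c t))\<^sup>2)
           integrable_on UNIV
       \<and> dirichlet_eta (s + 1) =
           - (pi / (2 * s)) * integral UNIV
               (\<lambda>t::real. (Complex c t) powr (-s) * cos (pi * Complex c t) / (sin (pi * Complex c t))\<^sup>2)"
proof -
  have c: "0 < c" "c < 1" using assms by auto
  have gc: "good c" using good_shift[OF c, of 0] by simp
  have f: "(\<lambda>t::real. (Complex c t) powr (-s) * cos (pi * Complex c t) / (sin (pi * Complex c t))\<^sup>2) = fs c s"
    by (simp add: fs_def[abs_def])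
  show ?thesis
    unfolding f
  proof
    show "fs c s integrable_on UNIV" by (rule fs_integrable[OF gc])
    have "dirichlet_eta (s + 1) = L c (s + 1) / 2" by (simp add: eta_eq[OF c])
    also have "\<dots> = - (pi / (2 * s)) * (- (s / pi) * L c (s + 1))"
      using assms(3) by (simp add: field_simps)
    also have "\<dots> = - (pi / (2 * s)) * integral UNIV (fs c s)"
      by (simp add: ibp[OF c])
    finally show "dirichlet_eta (s + 1) = - (pi / (2 * s)) * integral UNIV (fs c s)" .
  qed
qed

end
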